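(* Let $\varepsilon>0$. Every graph $G$ on $n$ vertices has treewidth $\mathrm{tw}(G)\le 2\,b_{\varepsilon}(G)+2\varepsilon n$.
   Context: A tree decomposition of a graph $G=(V,E)$ is a pair $(\{X_i:i\in I\},T=(I,F))$ where each $X_i\subseteq V$ and $T$ is a tree, such that (a) $\bigcup_{i\in I}X_i=V$; (b) for every edge $\{v,w\}\in E$ there is $i\in I$ with $\{v,w\}\subseteq X_i$; (c) whenever $j$ lies on the path from $i$ to $k$ in $T$, $X_i\cap X_k\subseteq X_j$. Its width is $\max_{i\in I}|X_i|-1$, and the treewidth $\mathrm{tw}(G)$ is the minimum width of a tree decomposition of $G$. For a graph $G'=(V',E')$ and $U\subseteq V'$, $N(U)$ denotes the set of vertices of $V'\setminus U$ adjacent (in $G'$) to some vertex of $U$. $G'$ is an $\varepsilon$-expander if every $U\subseteq V'$ with $|U|\le |V'|/2$ satisfies $|N(U)|\ge\varepsilon|U|$. A graph $G$ is $(b,\varepsilon)$-bounded if no subgraph $G'\subseteq G$ with at least $b$ vertices is an $\varepsilon$-expander. The $\varepsilon$-boundedness $b_\varepsilon(G)$ is the minimum $b$ for which $G$ is $(b+1,\varepsilon)$-bounded. *)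

theory Defs
  imports Complex_Main
begin

definition graph :: "'a set \<Rightarrow> 'a set set \<Rightarrow> bool" where
  "graph V E \<longleftrightarrow> finite V \<and> (\<forall>e\<in>E. e \<subseteq> V \<and> card e = 2)"

definition is_path :: "'b set \<Rightarrow> 'b set set \<Rightarrow> 'b list \<Rightarrow> 'b \<Rightarrow> 'b \<Rightarrow> bool" where
  "is_path I F p i k \<longleftrightarrow> p \<noteq> [] \<and> distinct p \<and> set p \<subseteq> I \<and> hd p = i \<and> last p = k \<and>
     (\<forall>j. Suc j < length p \<longrightarrow> {p ! j, p ! Suc j} \<in> F)"

definition is_cycle :: "'b set \<Rightarrow> 'b set set \<Rightarrow> 'b list \<Rightarrow> bool" where
  "is_cycle I F c \<longleftrightarrow> length c \<ge> 3 \<and> distinct c \<and> set c \<subseteq> I \<and>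
     (\<forall>j. Suc j < length c \<longrightarrow> {c ! j, c ! Suc j} \<in> F) \<and> {last c, hd c} \<in> F"

definition is_tree :: "'b set \<Rightarrow> 'b set set \<Rightarrow> bool" where
  "is_tree I F \<longleftrightarrow> finite I \<and> I \<noteq> {} \<and> graph I F \<and>
     (\<forall>i\<in>I. \<forall>k\<in>I. \<exists>p. is_path I F p i k) \<and> (\<nexists>c. is_cycle I F c)"

text \<open>Tree decomposition ({X i : i in I}, T = (I, F)) of G = (V, E).
  In a tree the path between two nodes is unique; "j lies on the path from i to k"
  is expressed as: j lies on every path from i to k.\<close>
definition is_tree_decomposition ::
  "'a set \<Rightarrow> 'a set set \<Rightarrow> (nat \<Rightarrow> 'a set) \<Rightarrow> nat set \<Rightarrow> nat set set \<Rightarrow> bool" where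
  "is_tree_decomposition V E X I F \<longleftrightarrow>
     is_tree I F \<and> (\<forall>i\<in>I. X i \<subseteq> V) \<and>
     (\<Union>i\<in>I. X i) = V \<and>
     (\<forall>v w. {v, w} \<in> E \<longrightarrow> (\<exists>i\<in>I. {v, w} \<subseteq> X i)) \<and>
     (\<forall>i\<in>I. \<forall>j\<in>I. \<forall>k\<in>I. (\<forall>p. is_path I F p i k \<longrightarrow> j \<in> set p) \<longrightarrow> X i \<inter> X k \<subseteq> X j)"

definition td_width :: "(nat \<Rightarrow> 'a set) \<Rightarrow> nat set \<Rightarrow> int" where
  "td_width X I = Max ((\<lambda>i. int (card (X i))) ` I) - 1"

definition treewidth :: "'a set \<Rightarrow> 'a set set \<Rightarrow> int" where
  "treewidth V E = (LEAST w. w \<in> {td_width X I | X I F. is_tree_decomposition V E X I F})"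

definition nbhd :: "'a set \<Rightarrow> 'a set set \<Rightarrow> 'a set \<Rightarrow> 'a set" where
  "nbhd V' E' U = {v \<in> V' - U. \<exists>u\<in>U. {u, v} \<in> E'}"

definition is_expander :: "real \<Rightarrow> 'a set \<Rightarrow> 'a set set \<Rightarrow> bool" where
  "is_expander \<epsilon> V' E' \<longleftrightarrow>
     (\<forall>U. U \<subseteq> V' \<and> real (card U) \<le> real (card V') / 2 \<longrightarrow>
          real (card (nbhd V' E' U)) \<ge> \<epsilon> * real (card U))"

definition subgraph :: "'a set \<Rightarrow> 'a set set \<Rightarrow> 'a set \<Rightarrow> 'a set set \<Rightarrow> bool" where
  "subgraph V' E' V E \<longleftrightarrow> V' \<subseteq> V \<and> E' \<subseteq> E \<and> (\<forall>e\<in>E'. e \<subseteq> V')"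

definition bounded_graph :: "nat \<Rightarrow> real \<Rightarrow> 'a set \<Rightarrow> 'a set set \<Rightarrow> bool" where
  "bounded_graph b \<epsilon> V E \<longleftrightarrow>
     (\<forall>V' E'. subgraph V' E' V E \<and> card V' \<ge> b \<longrightarrow> \<not> is_expander \<epsilon> V' E')"

definition boundedness :: "real \<Rightarrow> 'a set \<Rightarrow> 'a set set \<Rightarrow> nat" where
  "boundedness \<epsilon> V E = (LEAST b. bounded_graph (b + 1) \<epsilon> V E)"

end

theory Submission
  imports Defs
begin


lemma walk_path:
  assumes "R\<^sup>*\<^sup>* i k" "\<And>a b. R a b \<Longrightarrow> {a,b} \<in> F \<and> a \<in> T \<and> b \<in> T" "i \<in> T" "T \<subseteq> I"
  shows "\<exists>p. is_path I F p i k \<and> set p \<subseteq> T"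
  using assms(1)
proof (induction rule: rtranclp_induct)
  case base
  then show ?case using assms(3,4) by (auto simp: is_path_def intro!: exI[of _ "[i]"])
next
  case (step j k)
  then obtain p where p: "is_path I F p i j" "set p \<subseteq> T" by blast
  have e: "{j,k} \<in> F" "k \<in> T" using assms(2)[OF step(2)] by auto
  have pne: "p \<noteq> []" and pd: "distinct p" and ps: "set p \<subseteq> I" and ph: "hd p = i" and pl: "last p = j"
    and pe: "\<And>q. Suc q < length p \<Longrightarrow> {p ! q, p ! Suc q} \<in> F"
    using p(1) unfolding is_path_def by auto
  show ?case
  proof (cases "k \<in> set p")
    case True
    then obtain n where n: "n < length p" "p ! n = k" by (meson in_set_conv_nth)
    have tk: "take (Suc n) p = take n p @ [p ! n]" using n by (simp add: take_Suc_conv_app_nth)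
    have "is_path I F (take (Suc n) p) i k"
      unfolding is_path_def
    proof (intro conjI allI impI)
      show "take (Suc n) p \<noteq> []" by (simp add: tk)
      show "distinct (take (Suc n) p)" using pd by simp
      show "set (take (Suc n) p) \<subseteq> I" using set_take_subset ps by (rule order_trans)
      show "hd (take (Suc n) p) = i" using pne ph by (simp add: hd_take)
      show "last (take (Suc n) p) = k" using tk n by simp
      fix q assume "Suc q < length (take (Suc n) p)"
      then show "{take (Suc n) p ! q, take (Suc n) p ! Suc q} \<in> F" using pe by simp
    qed
    then show ?thesis using p(2) set_take_subset by (metis order_trans)
  next
    case False
    have "is_path I F (p @ [k]) i k"
      unfolding is_path_def
    proof (intro conjI allI impI)
      show "p @ [k] \<noteq> []" by simp
      show "distinct (p @ [k])" using p(1) False by (simp add: is_path_def)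
      show "set (p @ [k]) \<subseteq> I" using p e assms(4) by (auto simp: is_path_def)
      show "hd (p @ [k]) = i" using p(1) by (simp add: is_path_def)
      show "last (p @ [k]) = k" by simp
      fix q assume q: "Suc q < length (p @ [k])"
      show "{(p @ [k]) ! q, (p @ [k]) ! Suc q} \<in> F"
      proof (cases "Suc q < length p")
        case True
        then show ?thesis using p(1) by (auto simp: is_path_def nth_append)
      next
        case False
        then have "Suc q = length p" using q by simp
        moreover have "p ! q = j" using p(1) \<open>Suc q = length p\<close> unfolding is_path_def
          by (metis diff_Suc_1 last_conv_nth)
        ultimately show ?thesis using e by (simp add: nth_append)
      qed
    qed
    moreover have "set (p @ [k]) \<subseteq> T" using p(2) e by auto
    ultimately show ?thesis by blast
  qed
qed

lemma rtranclp_sym: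
  assumes "\<And>a b. R a b \<Longrightarrow> R b a" "R\<^sup>*\<^sup>* a b" shows "R\<^sup>*\<^sup>* b a"
  using assms(2)
proof (induction rule: rtranclp_induct)
  case base then show ?case by simp
next
  case (step y z)
  have "R z y" using assms(1) step(2) by blast
  then show ?case using step(3) by (rule converse_rtranclp_into_rtranclp)
qed

definition tadj :: "nat \<Rightarrow> (nat \<Rightarrow> nat) \<Rightarrow> nat \<Rightarrow> nat \<Rightarrow> bool" where
  "tadj m par a b \<longleftrightarrow> a < m \<and> b < m \<and> ((0 < a \<and> par a = b) \<or> (0 < b \<and> par b = a))"

lemma reach0:
  fixes R :: "nat \<Rightarrow> nat \<Rightarrow> bool" and par :: "nat \<Rightarrow> nat"
  assumes "\<forall>i. 0<i \<longrightarrow> i<m \<longrightarrow> par i < i" "\<And>j. 0<j \<Longrightarrow> j<m \<Longrightarrow> R j (par j)" "j < m"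
  shows "R\<^sup>*\<^sup>* j 0"
  using assms(3)
proof (induction j rule: less_induct)
  case (less j)
  show ?case
  proof (cases "j = 0")
    case True then show ?thesis by simp
  next
    case False
    have j0: "0 < j" using False by simp
    have pj: "par j < j" using assms(1) j0 less.prems by blast
    have h1: "R\<^sup>*\<^sup>* (par j) 0" using less.IH[OF pj] pj less.prems by linarith
    have h2: "R j (par j)" using assms(2)[OF j0 less.prems] .
    from h2 h1 show ?thesis by (rule converse_rtranclp_into_rtranclp)
  qed
qed

lemma reach_all:
  fixes R :: "nat \<Rightarrow> nat \<Rightarrow> bool" and par :: "nat \<Rightarrow> nat"
  assumes "\<forall>i. 0<i \<longrightarrow> i<m \<longrightarrow> par i < i" "\<And>j. 0<j \<Longrightarrow> j<m \<Longrightarrow> R j (par j)"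
    "\<And>a b. R a b \<Longrightarrow> R b a" "i < m" "k < m"
  shows "R\<^sup>*\<^sup>* i k"
proof -
  have hk: "R\<^sup>*\<^sup>* k 0" by (rule reach0[of m par R k, OF assms(1) assms(2) assms(5)])
  have h: "R\<^sup>*\<^sup>* 0 k" using assms(3) hk by (rule rtranclp_sym)
  have "R\<^sup>*\<^sup>* i 0" by (rule reach0[of m par R i, OF assms(1) assms(2) assms(4)])
  from this h show ?thesis by (rule rtranclp_trans)
qed



definition pF :: "nat \<Rightarrow> (nat \<Rightarrow> nat) \<Rightarrow> nat set set" where
  "pF m par = (\<lambda>i. {i, par i}) ` {0<..<m}"

lemma pF_edge:
  assumes "\<forall>i. 0<i \<longrightarrow> i<m \<longrightarrow> par i < i" "{x,y} \<in> pF m par" "y < x"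
  shows "y = par x"
proof -
  obtain a where a: "0 < a" "a < m" "{x,y} = {a, par a}" using assms(2) unfolding pF_def by auto
  have "par a < a" using assms(1) a by blast
  then show ?thesis using a(3) assms(3) by (auto simp: doubleton_eq_iff)
qed

lemma pF_neq:
  assumes "\<forall>i. 0<i \<longrightarrow> i<m \<longrightarrow> par i < i" "{x,y} \<in> pF m par"
  shows "x \<noteq> y"
proof -
  obtain a where a: "0 < a" "a < m" "{x,y} = {a, par a}" using assms(2) unfolding pF_def by auto
  have "par a < a" using assms(1) a by blast
  then show ?thesis using a(3) by (auto simp: doubleton_eq_iff)
qed

lemma no_cycle:
  assumes par: "\<forall>i. 0<i \<longrightarrow> i<m \<longrightarrow> par i < i"
  shows "\<not> is_cycle I (pF m par) c"
proof
  assume cyc: "is_cycle I (pF m par) c"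
  define n where "n = length c"
  have n3: "n \<ge> 3" and dc: "distinct c"
    and ce: "\<And>q. Suc q < n \<Longrightarrow> {c ! q, c ! Suc q} \<in> pF m par"
    and cl: "{last c, hd c} \<in> pF m par"
    using cyc unfolding is_cycle_def n_def by auto
  have cne: "c \<noteq> []" using n3 n_def by auto
  have edge: "{c ! q, c ! ((Suc q) mod n)} \<in> pF m par" if "q < n" for q
  proof (cases "Suc q < n")
    case True then show ?thesis using ce by simp
  next
    case False
    then have "q = n - 1" "Suc q = n" using that by auto
    moreover have "last c = c ! (n - 1)" using cne n_def by (simp add: last_conv_nth)
    moreover have "hd c = c ! 0" using cne by (simp add: hd_conv_nth)
    ultimately show ?thesis using cl by simp
  qed
  define mx where "mx = Max (set c)"
  have "mx \<in> set c" using cne mx_def by simp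
  then obtain j where j: "j < n" "c ! j = mx" using n_def by (metis in_set_conv_nth)
  have nb: "y = par mx" if "{mx, y} \<in> pF m par" "y \<in> set c" for y
  proof -
    have "y \<noteq> mx" using pF_neq[OF par that(1)] by simp
    moreover have "y \<le> mx" using that(2) mx_def by simp
    ultimately have "y < mx" by simp
    then show ?thesis using pF_edge[OF par that(1)] by simp
  qed
  define p1 where "p1 = Suc j mod n"
  define p2 where "p2 = (j + n - 1) mod n"
  have p1n: "p1 < n" and p2n: "p2 < n" using n3 p1_def p2_def by auto
  have s2: "Suc p2 mod n = j"
  proof -
    have "Suc p2 mod n = (j + n - 1 + 1) mod n" unfolding p2_def by (simp add: mod_Suc_eq)
    also have "j + n - 1 + 1 = j + n" using n3 by simp
    finally show ?thesis using j(1) by simp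
  qed
  have e1: "{mx, c ! p1} \<in> pF m par" using edge[OF j(1)] j(2) p1_def by simp
  have e2: "{c ! p2, mx} \<in> pF m par" using edge[OF p2n] s2 j(2) by simp
  have "c ! p1 = par mx" using nb[OF e1] p1n n_def by simp
  moreover have "c ! p2 = par mx" using nb e2 p2n n_def by (simp add: insert_commute)
  moreover have "p1 \<noteq> p2"
  proof (cases "Suc j < n")
    case True
    then have a: "p1 = Suc j" using p1_def by simp
    show ?thesis
    proof (cases "j = 0")
      case True
      then have "p2 = n - 1" using p2_def n3 by simp
      then show ?thesis using a True n3 by simp
    next
      case False
      then have eq: "j + n - 1 = (j - 1) + n" by simp
      have "p2 = ((j - 1) + n) mod n" unfolding p2_def by (simp only: eq)
      also have "\<dots> = (j - 1) mod n" by (rule mod_add_self2)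
      also have "\<dots> = j - 1" using j(1) by simp
      finally have "p2 = j - 1" .
      then show ?thesis using a by simp
    qed
  next
    case False
    then have jn: "j = n - 1" using j(1) by simp
    then have p10: "p1 = 0" using p1_def n3 by simp
    have eq: "j + n - 1 = (n - 2) + n" using jn n3 by simp
    have "p2 = ((n - 2) + n) mod n" unfolding p2_def by (simp only: eq)
    also have "\<dots> = (n - 2) mod n" by (rule mod_add_self2)
    also have "\<dots> = n - 2" using n3 by simp
    finally have "p2 = n - 2" .
    then show ?thesis using p10 n3 by simp
  qed
  ultimately show False using dc p1n p2n n_def nth_eq_iff_index_eq by metis
qed



definition tR :: "nat \<Rightarrow> (nat \<Rightarrow> nat) \<Rightarrow> (nat \<Rightarrow> 'a set) \<Rightarrow> 'a \<Rightarrow> nat \<Rightarrow> nat \<Rightarrow> bool" where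
  "tR m par X v a b \<longleftrightarrow> tadj m par a b \<and> v \<in> X a \<and> v \<in> X b"

definition rtd :: "'a set \<Rightarrow> 'a set set \<Rightarrow> (nat \<Rightarrow> 'a set) \<Rightarrow> nat \<Rightarrow> (nat \<Rightarrow> nat) \<Rightarrow> real \<Rightarrow> bool" where
  "rtd C E X m par bnd \<longleftrightarrow> 0 < m \<and> (\<forall>i. 0<i \<longrightarrow> i<m \<longrightarrow> par i < i) \<and> (\<forall>i<m. X i \<subseteq> C) \<and>
     C \<subseteq> (\<Union>i<m. X i) \<and>
     (\<forall>v w. {v,w} \<in> E \<longrightarrow> v \<in> C \<longrightarrow> w \<in> C \<longrightarrow> (\<exists>i<m. v \<in> X i \<and> w \<in> X i)) \<and>
     (\<forall>v i k. i<m \<longrightarrow> k<m \<longrightarrow> v \<in> X i \<longrightarrow> v \<in> X k \<longrightarrow> (tR m par X v)\<^sup>*\<^sup>* i k) \<and>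
     (\<forall>i<m. real (card (X i)) \<le> bnd)"

lemma tadj_edge:
  assumes "tadj m par a b"
  shows "{a,b} \<in> pF m par"
proof -
  have "a < m" "b < m" using assms by (auto simp: tadj_def)
  from assms consider "0 < a" "par a = b" | "0 < b" "par b = a" unfolding tadj_def by auto
  then show ?thesis
  proof cases
    case 1 then show ?thesis using \<open>a < m\<close> unfolding pF_def by auto
  next
    case 2
    then have "{a,b} = {b, par b}" by auto
    then show ?thesis using 2 \<open>b < m\<close> unfolding pF_def by auto
  qed
qed

lemma rtd_td:
  assumes r: "rtd V E X m par bnd" and g: "graph V E"
  shows "is_tree_decomposition V E X {0..<m} (pF m par) \<and> real_of_int (td_width X {0..<m}) \<le> bnd - 1"
proof -
  have m0: "0 < m" and par: "\<forall>i. 0<i \<longrightarrow> i<m \<longrightarrow> par i < i" and sub: "\<forall>i<m. X i \<subseteq> V"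
    and cov: "V \<subseteq> (\<Union>i<m. X i)"
    and ed: "\<forall>v w. {v,w} \<in> E \<longrightarrow> v \<in> V \<longrightarrow> w \<in> V \<longrightarrow> (\<exists>i<m. v \<in> X i \<and> w \<in> X i)"
    and con: "\<forall>v i k. i<m \<longrightarrow> k<m \<longrightarrow> v \<in> X i \<longrightarrow> v \<in> X k \<longrightarrow> (tR m par X v)\<^sup>*\<^sup>* i k"
    and bd: "\<forall>i<m. real (card (X i)) \<le> bnd"
    using r unfolding rtd_def by blast+
  let ?I = "{0..<m}" and ?F = "pF m par"
  have gI: "graph ?I ?F"
    unfolding graph_def
  proof (intro conjI ballI)
    show "finite ?I" by simp
    fix e assume "e \<in> ?F"
    then obtain a where a: "0 < a" "a < m" "e = {a, par a}" unfolding pF_def by auto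
    have "par a < a" using par a by blast
    then show "e \<subseteq> ?I" "card e = 2" using a by auto
  qed
  have conn: "\<exists>p. is_path ?I ?F p i k" if "i \<in> ?I" "k \<in> ?I" for i k
  proof -
    have "(tadj m par)\<^sup>*\<^sup>* i k"
    proof (rule reach_all[OF par])
      show "tadj m par j (par j)" if "0 < j" "j < m" for j
        using that par unfolding tadj_def by (metis order_less_trans)
      show "tadj m par b a" if "tadj m par a b" for a b using that unfolding tadj_def by blast
      show "i < m" "k < m" using \<open>i \<in> ?I\<close> \<open>k \<in> ?I\<close> by auto
    qed
    then have "\<exists>p. is_path ?I ?F p i k \<and> set p \<subseteq> ?I"
      by (rule walk_path) (use tadj_edge that in \<open>auto simp: tadj_def\<close>)
    then show ?thesis by blast
  qed
  have tree: "is_tree ?I ?F"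
    unfolding is_tree_def using gI conn no_cycle[OF par] m0 by auto
  have td: "is_tree_decomposition V E X ?I ?F"
    unfolding is_tree_decomposition_def
  proof (intro conjI)
    show "is_tree ?I ?F" by (rule tree)
    show "\<forall>i\<in>?I. X i \<subseteq> V" using sub by auto
    show "(\<Union>i\<in>?I. X i) = V" using sub cov by (auto simp: atLeast0LessThan)
    show "\<forall>v w. {v, w} \<in> E \<longrightarrow> (\<exists>i\<in>?I. {v, w} \<subseteq> X i)"
    proof (intro allI impI)
      fix v w assume e: "{v,w} \<in> E"
      then have "v \<in> V" "w \<in> V" using g unfolding graph_def by auto
      then show "\<exists>i\<in>?I. {v, w} \<subseteq> X i" using ed e by force
    qed
    show "\<forall>i\<in>?I. \<forall>j\<in>?I. \<forall>k\<in>?I. (\<forall>p. is_path ?I ?F p i k \<longrightarrow> j \<in> set p) \<longrightarrow> X i \<inter> X k \<subseteq> X j"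
    proof (intro ballI impI subsetI)
      fix i j k v
      assume i: "i \<in> ?I" and j: "j \<in> ?I" and k: "k \<in> ?I"
        and allp: "\<forall>p. is_path ?I ?F p i k \<longrightarrow> j \<in> set p" and v: "v \<in> X i \<inter> X k"
      have "(tR m par X v)\<^sup>*\<^sup>* i k" using con i k v by auto
      then have "\<exists>p. is_path ?I ?F p i k \<and> set p \<subseteq> {a. a < m \<and> v \<in> X a}"
        by (rule walk_path) (use tadj_edge v i in \<open>auto simp: tR_def tadj_def\<close>)
      then obtain p where "is_path ?I ?F p i k" "set p \<subseteq> {a. a < m \<and> v \<in> X a}" by blast
      then show "v \<in> X j" using allp by blast
    qed
  qed
  have "Max ((\<lambda>i. int (card (X i))) ` ?I) \<in> (\<lambda>i. int (card (X i))) ` ?I"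
    using m0 by (intro Max_in) auto
  then obtain i0 where i0: "i0 < m" "Max ((\<lambda>i. int (card (X i))) ` ?I) = int (card (X i0))" by auto
  have "real_of_int (td_width X ?I) = real (card (X i0)) - 1" unfolding td_width_def using i0 by simp
  also have "\<dots> \<le> bnd - 1" using bd i0 by auto
  finally show ?thesis using td by blast
qed



lemma rtranclp_map:
  assumes "\<And>a b. R a b \<Longrightarrow> Q (f a) (f b)" "R\<^sup>*\<^sup>* x y"
  shows "Q\<^sup>*\<^sup>* (f x) (f y)"
  using assms(2)
proof (induction rule: rtranclp_induct)
  case base then show ?case by simp
next
  case (step y z)
  have "Q (f y) (f z)" using assms(1) step(2) .
  with step(3) show ?case by (rule rtranclp.rtrancl_into_rtrancl)
qed

lemma tR_sym: "tR m par X v a b \<Longrightarrow> tR m par X v b a"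
  unfolding tR_def tadj_def by auto

lemma glue:
  assumes rA: "rtd A E X1 m1 p1 b1" and rB: "rtd B E X2 m2 p2 b2"
    and dAB: "A \<inter> B = {}" and dAS: "A \<inter> S = {}" and dBS: "B \<inter> S = {}"
    and noe: "\<And>v w. {v,w} \<in> E \<Longrightarrow> v \<in> A \<Longrightarrow> w \<in> B \<Longrightarrow> False"
    and bS: "real (card S) \<le> bnd" and bA: "b1 + real (card S) \<le> bnd" and bB: "b2 + real (card S) \<le> bnd"
  shows "\<exists>X m par. rtd (A \<union> B \<union> S) E X m par bnd"
proof -
  have m1: "0 < m1" and par1: "\<forall>i. 0<i \<longrightarrow> i<m1 \<longrightarrow> p1 i < i" and sub1: "\<forall>i<m1. X1 i \<subseteq> A"
    and cov1: "A \<subseteq> (\<Union>i<m1. X1 i)"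
    and ed1: "\<forall>v w. {v,w} \<in> E \<longrightarrow> v \<in> A \<longrightarrow> w \<in> A \<longrightarrow> (\<exists>i<m1. v \<in> X1 i \<and> w \<in> X1 i)"
    and con1: "\<forall>v i k. i<m1 \<longrightarrow> k<m1 \<longrightarrow> v \<in> X1 i \<longrightarrow> v \<in> X1 k \<longrightarrow> (tR m1 p1 X1 v)\<^sup>*\<^sup>* i k"
    and bd1: "\<forall>i<m1. real (card (X1 i)) \<le> b1"
    using rA unfolding rtd_def by blast+
  have m2: "0 < m2" and par2: "\<forall>i. 0<i \<longrightarrow> i<m2 \<longrightarrow> p2 i < i" and sub2: "\<forall>i<m2. X2 i \<subseteq> B"
    and cov2: "B \<subseteq> (\<Union>i<m2. X2 i)"
    and ed2: "\<forall>v w. {v,w} \<in> E \<longrightarrow> v \<in> B \<longrightarrow> w \<in> B \<longrightarrow> (\<exists>i<m2. v \<in> X2 i \<and> w \<in> X2 i)"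
    and con2: "\<forall>v i k. i<m2 \<longrightarrow> k<m2 \<longrightarrow> v \<in> X2 i \<longrightarrow> v \<in> X2 k \<longrightarrow> (tR m2 p2 X2 v)\<^sup>*\<^sup>* i k"
    and bd2: "\<forall>i<m2. real (card (X2 i)) \<le> b2"
    using rB unfolding rtd_def by blast+
  define m where "m = Suc (m1 + m2)"
  define X where "X i = (if i = 0 then S else if i \<le> m1 then X1 (i - 1) \<union> S else X2 (i - Suc m1) \<union> S)" for i
  define par where "par i = (if i \<le> m1 then (if i = 1 then 0 else Suc (p1 (i - 1)))
      else (if i = Suc m1 then 0 else Suc m1 + p2 (i - Suc m1)))" for i
  have X0: "X 0 = S" unfolding X_def by simp
  have XA: "X (Suc a) = X1 a \<union> S" if "a < m1" for a using that unfolding X_def by simp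
  have XB: "X (Suc m1 + a) = X2 a \<union> S" for a unfolding X_def by simp
  have PA: "par (Suc a) = Suc (p1 a)" if "0 < a" "a < m1" for a using that unfolding par_def by simp
  have PA0: "par (Suc 0) = 0" unfolding par_def using m1 by simp
  have PB: "par (Suc m1 + a) = Suc m1 + p2 a" if "0 < a" for a using that unfolding par_def by simp
  have PB0: "par (Suc m1) = 0" unfolding par_def by simp
  have cases_i: "i = 0 \<or> (\<exists>a<m1. i = Suc a) \<or> (\<exists>a<m2. i = Suc m1 + a)" if "i < m" for i
  proof -
    consider "i = 0" | "0 < i" "i \<le> m1" | "m1 < i" by linarith
    then show ?thesis
    proof cases
      case 2 then have "i = Suc (i - 1)" "i - 1 < m1" by auto
      then show ?thesis by blast
    next
      case 3 then have "i = Suc m1 + (i - Suc m1)" "i - Suc m1 < m2" using that m_def by auto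
      then show ?thesis by blast
    qed simp
  qed
  have Xsub: "X i \<subseteq> A \<union> B \<union> S" if "i < m" for i
  proof -
    from cases_i[OF that] consider "i=0" | a where "a<m1" "i = Suc a" | a where "a<m2" "i = Suc m1 + a" by auto
    then show ?thesis
    proof cases
      case 1 then show ?thesis using X0 by simp
    next
      case 2 then show ?thesis using XA[OF 2(1)] sub1 by auto
    next
      case 3 then show ?thesis using XB[of a] sub2 by auto
    qed
  qed
  have SX: "S \<subseteq> X i" if "i < m" for i
  proof -
    from cases_i[OF that] consider "i=0" | a where "a<m1" "i = Suc a" | a where "a<m2" "i = Suc m1 + a" by auto
    then show ?thesis
    proof cases
      case 1 then show ?thesis using X0 by simp
    next
      case 2 then show ?thesis using XA[OF 2(1)] by auto
    next
      case 3 then show ?thesis using XB[of a] by auto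
    qed
  qed
  have parlt: "\<forall>i. 0<i \<longrightarrow> i<m \<longrightarrow> par i < i"
  proof (intro allI impI)
    fix i assume i0: "0 < i" and im: "i < m"
    from cases_i[OF im] i0 consider a where "a < m1" "i = Suc a" | a where "a < m2" "i = Suc m1 + a" by auto
    then show "par i < i"
    proof cases
      case 1 then show ?thesis using PA PA0 par1 by (cases "a = 0") auto
    next
      case 2 then show ?thesis using PB PB0 par2 by (cases "a = 0") auto
    qed
  qed
  have mapA: "tR m par X v (Suc a) (Suc b)" if "tR m1 p1 X1 v a b" for v a b
  proof -
    have ab: "a < m1" "b < m1" "v \<in> X1 a" "v \<in> X1 b" and
      o: "(0 < a \<and> p1 a = b) \<or> (0 < b \<and> p1 b = a)" using that unfolding tR_def tadj_def by auto
    have "tadj m par (Suc a) (Suc b)" unfolding tadj_def using ab o PA m_def by auto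
    then show ?thesis unfolding tR_def using XA ab by auto
  qed
  have mapB: "tR m par X v (Suc m1 + a) (Suc m1 + b)" if "tR m2 p2 X2 v a b" for v a b
  proof -
    have ab: "a < m2" "b < m2" "v \<in> X2 a" "v \<in> X2 b" and
      o: "(0 < a \<and> p2 a = b) \<or> (0 < b \<and> p2 b = a)" using that unfolding tR_def tadj_def by auto
    have "tadj m par (Suc m1 + a) (Suc m1 + b)" unfolding tadj_def using ab o PB m_def by auto
    then show ?thesis unfolding tR_def using XB ab by auto
  qed
  have "rtd (A \<union> B \<union> S) E X m par bnd"
    unfolding rtd_def
  proof (intro conjI)
    show "0 < m" using m_def by simp
    show "\<forall>i. 0<i \<longrightarrow> i<m \<longrightarrow> par i < i" by (rule parlt)
    show "\<forall>i<m. X i \<subseteq> A \<union> B \<union> S" using Xsub by blast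
    show "A \<union> B \<union> S \<subseteq> (\<Union>i<m. X i)"
    proof
      fix v assume "v \<in> A \<union> B \<union> S"
      then consider "v \<in> A" | "v \<in> B" | "v \<in> S" by blast
      then show "v \<in> (\<Union>i<m. X i)"
      proof cases
        case 1 then obtain a where "a < m1" "v \<in> X1 a" using cov1 by blast
        then show ?thesis using XA[of a] m_def by (auto intro!: bexI[of _ "Suc a"])
      next
        case 2 then obtain a where "a < m2" "v \<in> X2 a" using cov2 by blast
        then show ?thesis using XB[of a] m_def by (auto intro!: bexI[of _ "Suc m1 + a"])
      next
        case 3 then show ?thesis using X0 m_def by (auto intro!: bexI[of _ 0])
      qed
    qed
    show "\<forall>v w. {v,w} \<in> E \<longrightarrow> v \<in> A \<union> B \<union> S \<longrightarrow> w \<in> A \<union> B \<union> S \<longrightarrow> (\<exists>i<m. v \<in> X i \<and> w \<in> X i)"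
    proof (intro allI impI)
      fix v w assume e: "{v,w} \<in> E" and v: "v \<in> A \<union> B \<union> S" and w: "w \<in> A \<union> B \<union> S"
      have e': "{w,v} \<in> E" using e by (simp add: insert_commute)
      have inA: "\<exists>i<m. u \<in> X i \<and> S \<subseteq> X i" if uu: "u \<in> A" for u
      proof -
        obtain a where "a < m1" "u \<in> X1 a" using cov1 uu by blast
        then show ?thesis using XA[of a] m_def by (auto intro!: exI[of _ "Suc a"])
      qed
      have inB: "\<exists>i<m. u \<in> X i \<and> S \<subseteq> X i" if uu: "u \<in> B" for u
      proof -
        obtain a where "a < m2" "u \<in> X2 a" using cov2 uu by blast
        then show ?thesis using XB[of a] m_def by (auto intro!: exI[of _ "Suc m1 + a"])
      qed
      consider "v \<in> A" "w \<in> A" | "v \<in> B" "w \<in> B" | "v \<in> S" | "w \<in> S" | "v \<in> A" "w \<in> B" | "v \<in> B" "w \<in> A"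
        using v w by blast
      then show "\<exists>i<m. v \<in> X i \<and> w \<in> X i"
      proof cases
        case 1 then obtain a where "a < m1" "v \<in> X1 a" "w \<in> X1 a" using ed1 e by blast
        then show ?thesis using XA[of a] m_def by (auto intro!: exI[of _ "Suc a"])
      next
        case 2 then obtain a where "a < m2" "v \<in> X2 a" "w \<in> X2 a" using ed2 e by blast
        then show ?thesis using XB[of a] m_def by (auto intro!: exI[of _ "Suc m1 + a"])
      next
        case 3
        then show ?thesis using w
        proof (elim UnE)
          assume "w \<in> A" then show ?thesis using inA 3 by blast
        next
          assume "w \<in> B" then show ?thesis using inB 3 by blast
        next
          assume "w \<in> S" then show ?thesis using 3 X0 m_def by (auto intro!: exI[of _ 0])
        qed
      next
        case 4
        then show ?thesis using v
        proof (elim UnE)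
          assume "v \<in> A" then show ?thesis using inA 4 by blast
        next
          assume "v \<in> B" then show ?thesis using inB 4 by blast
        next
          assume "v \<in> S" then show ?thesis using 4 X0 m_def by (auto intro!: exI[of _ 0])
        qed
      next
        case 5 then show ?thesis using noe e by blast
      next
        case 6 then show ?thesis using noe e' by blast
      qed
    qed
    show "\<forall>v i k. i<m \<longrightarrow> k<m \<longrightarrow> v \<in> X i \<longrightarrow> v \<in> X k \<longrightarrow> (tR m par X v)\<^sup>*\<^sup>* i k"
    proof (intro allI impI)
      fix v i k assume im: "i < m" and km: "k < m" and vi: "v \<in> X i" and vk: "v \<in> X k"
      have vC: "v \<in> A \<union> B \<union> S" using Xsub im vi by blast
      then consider "v \<in> S" | "v \<in> A" | "v \<in> B" by blast
      then show "(tR m par X v)\<^sup>*\<^sup>* i k"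
      proof cases
        case 1
        show ?thesis
        proof (rule reach_all[OF parlt])
          show "tR m par X v j (par j)" if "0 < j" "j < m" for j
          proof -
            have pj: "par j < j" using parlt that by blast
            then have "par j < m" using that by simp
            then have "v \<in> X (par j)" "v \<in> X j" using SX[of "par j"] SX[OF that(2)] 1 by auto
            then show ?thesis unfolding tR_def tadj_def using that pj by auto
          qed
          show "tR m par X v b a" if "tR m par X v a b" for a b using tR_sym that .
        qed (use im km in auto)
      next
        case 2
        then have vn: "v \<notin> S" "v \<notin> B" using dAS dAB by auto
        have loc: "\<exists>a<m1. j = Suc a \<and> v \<in> X1 a" if "j < m" "v \<in> X j" for j
        proof -
          from cases_i[OF that(1)] consider "j=0" | a where "a<m1" "j = Suc a" | a where "a<m2" "j = Suc m1 + a" by auto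
          then show ?thesis
          proof cases
            case 1 then show ?thesis using X0 vn that(2) by simp
          next
            case 2 then show ?thesis using XA[OF 2(1)] vn that(2) by auto
          next
            case 3 then show ?thesis using XB[of a] vn that(2) sub2 by auto
          qed
        qed
        obtain a where a: "a < m1" "i = Suc a" "v \<in> X1 a" using loc im vi by blast
        obtain c where c: "c < m1" "k = Suc c" "v \<in> X1 c" using loc km vk by blast
        have ac: "(tR m1 p1 X1 v)\<^sup>*\<^sup>* a c" using con1 a c by blast
        have st: "\<And>x y. tR m1 p1 X1 v x y \<Longrightarrow> tR m par X v (Suc x) (Suc y)" by (rule mapA)
        have "(tR m par X v)\<^sup>*\<^sup>* (Suc a) (Suc c)" using rtranclp_map[of "tR m1 p1 X1 v" "tR m par X v" Suc, OF st ac] .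
        then show ?thesis using a c by simp
      next
        case 3
        then have vn: "v \<notin> S" "v \<notin> A" using dBS dAB by auto
        have loc: "\<exists>a<m2. j = Suc m1 + a \<and> v \<in> X2 a" if "j < m" "v \<in> X j" for j
        proof -
          from cases_i[OF that(1)] consider "j=0" | a where "a<m1" "j = Suc a" | a where "a<m2" "j = Suc m1 + a" by auto
          then show ?thesis
          proof cases
            case 1 then show ?thesis using X0 vn that(2) by simp
          next
            case 2 then show ?thesis using XA[OF 2(1)] vn that(2) sub1 by auto
          next
            case 3 then show ?thesis using XB[of a] vn that(2) by auto
          qed
        qed
        obtain a where a: "a < m2" "i = Suc m1 + a" "v \<in> X2 a" using loc im vi by blast
        obtain c where c: "c < m2" "k = Suc m1 + c" "v \<in> X2 c" using loc km vk by blast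
        have ac: "(tR m2 p2 X2 v)\<^sup>*\<^sup>* a c" using con2 a c by blast
        have st: "\<And>x y. tR m2 p2 X2 v x y \<Longrightarrow> tR m par X v ((\<lambda>x. Suc m1 + x) x) ((\<lambda>x. Suc m1 + x) y)" using mapB by blast
        have "(tR m par X v)\<^sup>*\<^sup>* ((\<lambda>x. Suc m1 + x) a) ((\<lambda>x. Suc m1 + x) c)" using rtranclp_map[of "tR m2 p2 X2 v" "tR m par X v" "\<lambda>x. Suc m1 + x", OF st ac] .
        then have "(tR m par X v)\<^sup>*\<^sup>* (Suc m1 + a) (Suc m1 + c)" by simp
        then show ?thesis using a c by simp
      qed
    qed
    show "\<forall>i<m. real (card (X i)) \<le> bnd"
    proof (intro allI impI)
      fix i assume im: "i < m"
      from cases_i[OF im] consider "i = 0" | a where "a < m1" "i = Suc a" | a where "a < m2" "i = Suc m1 + a" by auto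
      then show "real (card (X i)) \<le> bnd"
      proof cases
        case 1 then show ?thesis using X0 bS by simp
      next
        case 2
        have "card (X i) \<le> card (X1 a) + card S" using XA[OF 2(1)] 2(2) card_Un_le by simp
        then have "real (card (X i)) \<le> real (card (X1 a)) + real (card S)" by linarith
        then show ?thesis using bd1 2(1) bA by fastforce
      next
        case 3
        have "card (X i) \<le> card (X2 a) + card S" using XB 3(2) card_Un_le by simp
        then have "real (card (X i)) \<le> real (card (X2 a)) + real (card S)" by linarith
        then show ?thesis using bd2 3(1) bB by fastforce
      qed
    qed
  qed
  then show ?thesis by blast
qed



lemma base_rtd:
  assumes "real (card C) \<le> bnd"
  shows "rtd C E (\<lambda>_. C) 1 id bnd"
  unfolding rtd_def using assms by auto

lemma main_rtd:
  fixes V :: "'a set" and E :: "'a set set"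
  assumes g: "graph V E" and bd: "bounded_graph (b+1) \<epsilon> V E" and ep: "\<epsilon> > 0"
  shows "C \<subseteq> V \<Longrightarrow> \<exists>X m par. rtd C E X m par (real b + \<epsilon> * real (card C))"
proof (induction "card C" arbitrary: C rule: less_induct)
  case less
  have finV: "finite V" using g unfolding graph_def by blast
  have finC: "finite C" using less.prems finV finite_subset by blast
  show ?case
  proof (cases "card C \<le> b")
    case True
    have "0 \<le> \<epsilon> * real (card C)" using ep by simp
    moreover have "real (card C) \<le> real b" using True by simp
    ultimately have "real (card C) \<le> real b + \<epsilon> * real (card C)" by linarith
    then show ?thesis using base_rtd by blast
  next
    case False
    define EC where "EC = {e \<in> E. e \<subseteq> C}"
    have "subgraph C EC V E" unfolding subgraph_def EC_def using less.prems by auto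
    moreover have "card C \<ge> b + 1" using False by simp
    ultimately have "\<not> is_expander \<epsilon> C EC" using bd unfolding bounded_graph_def by blast
    then obtain U where U: "U \<subseteq> C" "real (card U) \<le> real (card C) / 2"
      and NU: "real (card (nbhd C EC U)) < \<epsilon> * real (card U)"
      unfolding is_expander_def by (auto simp: not_le)
    define N where "N = nbhd C EC U"
    define B where "B = C - U - N"
    have NC: "N \<subseteq> C - U" unfolding N_def nbhd_def by auto
    have Une: "U \<noteq> {}" using NU by (auto simp: N_def)
    have finU: "finite U" using U(1) finC finite_subset by blast
    have cU: "card U > 0" using Une finU by (simp add: card_gt_0_iff)
    have cUC: "card U < card C" using U(2) cU by linarith
    have BCU: "B \<subseteq> C - U" unfolding B_def by auto
    have cCU: "card (C - U) = card C - card U" using U(1) finU by (simp add: card_Diff_subset)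
    have cB: "card B \<le> card C - card U" using BCU cCU finC by (metis card_mono finite_Diff)
    have cBC: "card B < card C" using cB cU cUC by linarith
    obtain X1 m1 p1 where r1: "rtd U E X1 m1 p1 (real b + \<epsilon> * real (card U))"
      using less.hyps[OF cUC] U(1) less.prems by blast
    obtain X2 m2 p2 where r2: "rtd B E X2 m2 p2 (real b + \<epsilon> * real (card B))"
      using less.hyps[OF cBC] BCU less.prems by blast
    have noe: "False" if "{v,w} \<in> E" "v \<in> U" "w \<in> B" for v w
    proof -
      have "w \<in> C" "w \<notin> U" "w \<notin> N" using that BCU B_def by auto
      moreover have "v \<in> C" using that U(1) by auto
      ultimately have "{v,w} \<in> EC" using that unfolding EC_def by auto
      then have "w \<in> N" using \<open>w \<in> C\<close> \<open>w \<notin> U\<close> that(2) unfolding N_def nbhd_def by auto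
      then show False using \<open>w \<notin> N\<close> by simp
    qed
    have CU: "U \<union> B \<union> N = C" using U(1) NC unfolding B_def by auto
    have cN: "real (card N) < \<epsilon> * real (card U)" using NU N_def by simp
    have eU: "\<epsilon> * real (card U) \<le> \<epsilon> * real (card C) / 2" using U(2) ep
      by (metis mult_left_mono less_eq_real_def times_divide_eq_right)
    have eB: "\<epsilon> * real (card B) \<le> \<epsilon> * (real (card C) - real (card U))"
    proof -
      have "real (card B) \<le> real (card C) - real (card U)" using cB cUC by linarith
      then show ?thesis using ep by (simp add: mult_left_mono)
    qed
    have eC: "\<epsilon> * real (card U) \<le> \<epsilon> * real (card C)" using cUC ep by simp
    have "\<exists>X m par. rtd (U \<union> B \<union> N) E X m par (real b + \<epsilon> * real (card C))"
    proof (rule glue[OF r1 r2])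
      show "U \<inter> B = {}" "U \<inter> N = {}" "B \<inter> N = {}" using NC unfolding B_def by auto
      show "\<And>v w. {v,w} \<in> E \<Longrightarrow> v \<in> U \<Longrightarrow> w \<in> B \<Longrightarrow> False" using noe by blast
      show "real (card N) \<le> real b + \<epsilon> * real (card C)" using cN eC by simp
      show "real b + \<epsilon> * real (card U) + real (card N) \<le> real b + \<epsilon> * real (card C)" using cN eU by simp
      show "real b + \<epsilon> * real (card B) + real (card N) \<le> real b + \<epsilon> * real (card C)"
        using cN eB by (simp add: algebra_simps)
    qed
    then show ?thesis using CU by simp
  qed
qed



lemma td_width_ge:
  assumes "is_tree_decomposition V E X I F"
  shows "td_width X I \<ge> -1"
proof -
  have "finite I" "I \<noteq> {}" using assms unfolding is_tree_decomposition_def is_tree_def by auto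
  then obtain i where i: "i \<in> I" by blast
  have "int (card (X i)) \<le> Max ((\<lambda>i. int (card (X i))) ` I)"
    using \<open>finite I\<close> i by (intro Max_ge) auto
  then show ?thesis unfolding td_width_def by linarith
qed

lemma tw_le:
  assumes td: "is_tree_decomposition V E X I F"
  shows "treewidth V E \<le> td_width X I"
proof -
  define W where "W = {td_width X I | X I F. is_tree_decomposition V E X I F}"
  have w1: "td_width X I \<in> W" using td unfolding W_def by blast
  have lb: "w \<ge> -1" if "w \<in> W" for w using that td_width_ge unfolding W_def by blast
  define k where "k = (LEAST k::nat. \<exists>w\<in>W. nat (w + 1) = k)"
  have "\<exists>w\<in>W. nat (w + 1) = k" unfolding k_def by (rule LeastI_ex) (use w1 in blast)
  then obtain w0 where w0: "w0 \<in> W" "nat (w0 + 1) = k" by blast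
  have mn: "w0 \<le> w" if "w \<in> W" for w
  proof -
    have "k \<le> nat (w + 1)" unfolding k_def by (rule Least_le) (use that in blast)
    then show ?thesis using w0 lb[OF that] lb[OF w0(1)] by linarith
  qed
  have "treewidth V E = w0"
    unfolding treewidth_def W_def[symmetric] by (rule Least_equality) (use w0 mn in auto)
  then show ?thesis using mn[OF w1] by simp
qed

theorem theorem6:
  fixes V :: "'a set" and E :: "'a set set" and \<epsilon> :: real
  assumes "\<epsilon> > 0" and "graph V E"
  shows "real_of_int (treewidth V E) \<le> 2 * real (boundedness \<epsilon> V E) + 2 * \<epsilon> * real (card V)"
proof -
  define b where "b = boundedness \<epsilon> V E"
  have finV: "finite V" using assms(2) unfolding graph_def by blast
  have "bounded_graph (card V + 1) \<epsilon> V E"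
    unfolding bounded_graph_def
  proof (intro allI impI)
    fix V' :: "'a set" and E' assume h: "subgraph V' E' V E \<and> card V + 1 \<le> card V'"
    then have "card V' \<le> card V" using finV unfolding subgraph_def by (simp add: card_mono)
    then show "\<not> is_expander \<epsilon> V' E'" using h by simp
  qed
  then have bd: "bounded_graph (b + 1) \<epsilon> V E" unfolding b_def boundedness_def by (rule LeastI)
  obtain X m par where r: "rtd V E X m par (real b + \<epsilon> * real (card V))"
    using main_rtd[OF assms(2) bd assms(1)] by blast
  have td: "is_tree_decomposition V E X {0..<m} (pF m par)"
    and w: "real_of_int (td_width X {0..<m}) \<le> real b + \<epsilon> * real (card V) - 1"
    using rtd_td[OF r assms(2)] by auto
  have "treewidth V E \<le> td_width X {0..<m}" by (rule tw_le[OF td])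
  then have "real_of_int (treewidth V E) \<le> real b + \<epsilon> * real (card V) - 1" using w by linarith
  moreover have "0 \<le> \<epsilon> * real (card V)" using assms(1) by simp
  ultimately show ?thesis unfolding b_def by linarith
qed

end
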